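(* Let agent $i\in[A]$ satisfy condition (M). Then for every initial condition $X(0)\in\mathbb{N}^A$, $$\prod_{j\ne i}\exp\Big\{-F_j(X_j(0))\sum_{k=X_i(0)}^{\infty}\frac{1}{F_i(k)}\Big\}\;\le\;\mathbb{P}(tMon_i)\;\le\;\prod_{j\ne i}\exp\Big\{-c\,F_j(X_j(0))\sum_{k=X_i(0)}^{\infty}\frac{1}{F_i(k)}\Big\},$$ where $$c:=\inf_{k\in\mathbb{N}_0}\frac{F_i(X_i(0)+k)}{F_i(X_i(0)+k)+\sum_{j\ne i}F_j(X_j(0))}>0 .$$
   Context: Fix $A\ge 2$, $[A]=\{1,\dots,A\}$, and feedback functions $F_i:\mathbb{N}=\{1,2,\dots\}\to(0,\infty)$, $i\in[A]$. The generalized Pólya urn is the Markov chain $X(n)=(X_1(n),\dots,X_A(n))$, $n\in\mathbb{N}_0$, on $\mathbb{N}^A$ with initial condition $X(0)$ (all $X_i(0)\ge1$) and transition probabilities $\mathbb{P}(X(n+1)=X(n)+e^{(i)}\mid X(n))=F_i(X_i(n))/\sum_{j=1}^AF_j(X_j(n))$, where $e^{(i)}$ is the $i$-th unit vector. Total monopoly of agent $i$ is the event $tMon_i=\{\forall n\ge0\ \forall j\ne i: X_j(n)=X_j(0)\}$. Agent $i$ satisfies condition (M) if $\sum_{k=1}^\infty 1/F_i(k)<\infty$. *)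

theory Defs
  imports "HOL-Probability.Probability"
begin

text \<open>Agents are the elements of a finite type 'ag (so [A] has CARD('ag) elements). A generalized Polya urn with feedback F and
initial condition x0 is any stochastic process X on a probability space M whose
finite-dimensional distributions are those of the Markov chain with transitions
x -> x + e_k with probability F k (x k) / (sum_j F j (x j)).\<close>

definition gpu_chain ::
  "'w measure \<Rightarrow> ('ag::finite \<Rightarrow> nat \<Rightarrow> real) \<Rightarrow> ('ag \<Rightarrow> nat) \<Rightarrow> (nat \<Rightarrow> 'w \<Rightarrow> ('ag \<Rightarrow> nat)) \<Rightarrow> bool"
  where
  "gpu_chain M F x0 X \<longleftrightarrow>
     prob_space M \<and>
     (\<forall>n. X n \<in> measurable M (count_space UNIV)) \<and>
     (AE \<omega> in M. X 0 \<omega> = x0) \<and>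
     (\<forall>n h k. measure M {\<omega> \<in> space M. (\<forall>m\<le>n. X m \<omega> = h m) \<and> X (Suc n) \<omega> = (h n)(k := h n k + 1)}
        = measure M {\<omega> \<in> space M. \<forall>m\<le>n. X m \<omega> = h m} * (F k (h n k) / (\<Sum>j\<in>UNIV. F j (h n j))))"

definition tMon :: "'w measure \<Rightarrow> (nat \<Rightarrow> 'w \<Rightarrow> ('ag \<Rightarrow> nat)) \<Rightarrow> 'ag \<Rightarrow> 'w set" where
  "tMon M X i = {\<omega> \<in> space M. \<forall>n. \<forall>j. j \<noteq> i \<longrightarrow> X n \<omega> j = X 0 \<omega> j}"

end

theory Submission
  imports Defs
begin

lemma predX:
  fixes X :: "nat \<Rightarrow> 'w \<Rightarrow> ('ag::finite \<Rightarrow> nat)"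
  assumes "\<And>n. X n \<in> measurable M (count_space UNIV)"
  shows "{\<omega>\<in>space M. P (X n \<omega>)} \<in> sets M"
proof -
  have "{\<omega>\<in>space M. P (X n \<omega>)} = X n -` {x. P x} \<inter> space M" by auto
  also have "\<dots> \<in> sets M" by (rule measurable_sets[OF assms]) simp
  finally show ?thesis .
qed
lemma tmon_meas:
  fixes X :: "nat \<Rightarrow> 'w \<Rightarrow> ('ag::finite \<Rightarrow> nat)"
  assumes "\<And>n. X n \<in> measurable M (count_space UNIV)"
  shows "tMon M X i \<in> sets M"
proof -
  have e: "{\<omega>\<in>space M. j \<noteq> i \<longrightarrow> X n \<omega> j = X 0 \<omega> j} \<in> sets M" for n j
  proof (cases "j = i")
    case True then show ?thesis by simp
  next
    case False
    have "{\<omega>\<in>space M. j \<noteq> i \<longrightarrow> X n \<omega> j = X 0 \<omega> j} = (\<Union>v. {\<omega>\<in>space M. X n \<omega> j = v} \<inter> {\<omega>\<in>space M. X 0 \<omega> j = v})" using False by auto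
    also have "\<dots> \<in> sets M" using predX[OF assms] by (intro sets.countable_UN' sets.Int) auto
    finally show ?thesis .
  qed
  have "tMon M X i = space M \<inter> (\<Inter>n. \<Inter>j. {\<omega>\<in>space M. j \<noteq> i \<longrightarrow> X n \<omega> j = X 0 \<omega> j})"
    unfolding tMon_def by auto
  also have "\<dots> \<in> sets M" using e by (intro sets.Int sets.countable_INT' sets.finite_INT) auto
  finally show ?thesis .
qed

theorem mainTheorem1:
  fixes F :: "'ag::finite \<Rightarrow> nat \<Rightarrow> real"
    and x0 :: "'ag \<Rightarrow> nat"
    and M :: "'w measure"
    and X :: "nat \<Rightarrow> 'w \<Rightarrow> ('ag \<Rightarrow> nat)"
    and i :: 'ag
  assumes "CARD('ag) \<ge> 2"
    and "\<forall>j k. k \<ge> 1 \<longrightarrow> F j k > 0"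
    and "\<forall>j. x0 j \<ge> 1"
    and "summable (\<lambda>k. 1 / F i (Suc k))"
    and "gpu_chain M F x0 X"
  shows "let T = (\<Sum>k. 1 / F i (x0 i + k));
             c = (INF k. F i (x0 i + k) / (F i (x0 i + k) + (\<Sum>j\<in>UNIV - {i}. F j (x0 j))))
         in c > 0 \<and>
            (\<Prod>j\<in>UNIV - {i}. exp (- F j (x0 j) * T)) \<le> measure M (tMon M X i) \<and>
            measure M (tMon M X i) \<le> (\<Prod>j\<in>UNIV - {i}. exp (- c * F j (x0 j) * T))"
proof -
  note Fpos = assms(2)[rule_format]
  have x0pos: "x0 j \<ge> 1" for j using assms(3) by auto
  have PS: "prob_space M" and Xm: "\<And>n. X n \<in> measurable M (count_space UNIV)"
    and AE0: "AE \<omega> in M. X 0 \<omega> = x0"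
    and tr: "\<And>n h k. measure M {\<omega> \<in> space M. (\<forall>m\<le>n. X m \<omega> = h m) \<and> X (Suc n) \<omega> = (h n)(k := h n k + 1)}
        = measure M {\<omega> \<in> space M. \<forall>m\<le>n. X m \<omega> = h m} * (F k (h n k) / (\<Sum>j\<in>UNIV. F j (h n j)))"
    using assms(5) unfolding gpu_chain_def by blast+
  interpret prob_space M by (rule PS)
  define S where "S = (\<Sum>j\<in>UNIV - {i}. F j (x0 j))"
  define a where "a k = F i (x0 i + k)" for k
  define p where "p k = a k / (a k + S)" for k
  define T where "T = (\<Sum>k. 1 / a k)"
  define c where "c = (INF k. p k)"
  define h where "h m = x0(i := x0 i + m)" for m
  define B where "B n = {\<omega>\<in>space M. \<forall>m\<le>n. X m \<omega> = h m}" for n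
  define tM where "tM = tMon M X i"
  have S0: "S \<ge> 0" unfolding S_def using Fpos x0pos by (intro sum_nonneg) (auto intro: less_imp_le)
  have apos: "a k > 0" for k unfolding a_def using Fpos[of "x0 i + k" i] x0pos[of i] by auto
  have ppos: "p k > 0" for k unfolding p_def using apos S0 by (auto intro!: divide_pos_pos add_pos_nonneg)
  have sumA: "summable (\<lambda>k. 1 / a k)"
  proof -
    obtain d where d: "x0 i = Suc d" using x0pos[of i] by (cases "x0 i") auto
    have "summable (\<lambda>k. (\<lambda>k. 1 / F i (Suc k)) (k + d))"
      using assms(4) by (subst summable_iff_shift)
    then show ?thesis unfolding a_def d by (simp add: add.commute)
  qed
  have bdd: "bdd_below (range p)" using ppos by (auto intro!: bdd_belowI[of _ 0] less_imp_le)
  have cle: "c \<le> p k" for k unfolding c_def by (rule cINF_lower[OF bdd]) simp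
  have cpos: "c > 0"
  proof -
    have "(\<lambda>k. 1 / a k) \<longlonglongrightarrow> 0" by (rule summable_LIMSEQ_zero[OF sumA])
    from order_tendstoD(2)[OF this, of "1/(S+1)"] S0
    obtain N where N: "\<And>k. k \<ge> N \<Longrightarrow> 1 / a k < 1/(S+1)"
      by (auto simp: eventually_sequentially)
    have half: "p k \<ge> 1/2" if "k \<ge> N" for k
    proof -
      have "a k > S + 1"
      proof (rule ccontr)
        assume "\<not> a k > S + 1"
        then have "1 / (S + 1) \<le> 1 / a k" using apos[of k] S0 by (intro divide_left_mono) auto
        then show False using N[OF that] by simp
      qed
      then show ?thesis unfolding p_def using apos[of k] S0 by (simp add: field_simps)
    qed
    define m where "m = Min (insert (1/2) (p ` {..<N}))"
    have mpos: "m > 0" unfolding m_def using ppos by (subst Min_gr_iff) auto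
    have "m \<le> p k" for k
    proof (cases "k < N")
      case True then show ?thesis unfolding m_def by (intro Min_le) auto
    next
      case False
      then have "m \<le> 1/2" unfolding m_def by (intro Min_le) auto
      then show ?thesis using half[of k] False by auto
    qed
    then have "m \<le> c" unfolding c_def by (intro cINF_greatest) auto
    then show ?thesis using mpos by auto
  qed
  have Bs: "B n \<in> sets M" for n
  proof -
    have "B n = space M \<inter> (\<Inter>m\<in>{..n}. {\<omega>\<in>space M. X m \<omega> = h m})" unfolding B_def by auto
    also have "\<dots> \<in> sets M" using predX[OF Xm] by (intro sets.Int sets.finite_INT) auto
    finally show ?thesis .
  qed
  have tMs: "tM \<in> sets M" unfolding tM_def by (rule tmon_meas[OF Xm])
  have hn: "h n j = x0 j" if "j \<noteq> i" for n j using that unfolding h_def by simp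
  have hpos: "h n j \<ge> 1" for n j unfolding h_def using x0pos[of j] x0pos[of i] by auto
  have sumh: "(\<Sum>j\<in>UNIV. F j (h n j)) = a n + S" for n
  proof -
    have "(\<Sum>j\<in>UNIV. F j (h n j)) = F i (h n i) + (\<Sum>j\<in>UNIV-{i}. F j (h n j))"
      by (rule sum.remove) auto
    also have "(\<Sum>j\<in>UNIV-{i}. F j (h n j)) = S" unfolding S_def by (intro sum.cong) (auto simp: hn)
    finally show ?thesis unfolding a_def h_def by simp
  qed
  have hSuc: "(h n)(i := h n i + 1) = h (Suc n)" for n unfolding h_def by (simp add: fun_eq_iff)
  have Brec: "measure M (B (Suc n)) = measure M (B n) * p n" for n
  proof -
    have "B (Suc n) = {\<omega> \<in> space M. (\<forall>m\<le>n. X m \<omega> = h m) \<and> X (Suc n) \<omega> = (h n)(i := h n i + 1)}"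
      unfolding B_def hSuc by (auto simp: le_Suc_eq)
    then show ?thesis using tr[of n h i] unfolding B_def[symmetric] sumh p_def
      by (simp add: h_def a_def)
  qed
  have B0: "measure M (B 0) = 1"
  proof -
    have "B 0 = {\<omega>\<in>space M. X 0 \<omega> = x0}" unfolding B_def h_def by auto
    then show ?thesis using prob_Collect_eq_1[of "\<lambda>\<omega>. X 0 \<omega> = x0"] Bs[of 0] AE0 by simp
  qed
  have PB: "measure M (B n) = (\<Prod>k<n. p k)" for n
    by (induction n) (simp_all add: B0 Brec)
  have key: "measure M (tM \<inter> B n) = measure M tM" for n
  proof (induction n)
    case 0
    have "AE \<omega> in M. (\<omega> \<in> tM \<inter> B 0) = (\<omega> \<in> tM)"
      using AE0 by eventually_elim (auto simp: B_def h_def tM_def tMon_def)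
    then show ?case using Bs tMs by (intro measure_eq_AE) auto
  next
    case (Suc n)
    define E where "E k = {\<omega> \<in> space M. (\<forall>m\<le>n. X m \<omega> = h m) \<and> X (Suc n) \<omega> = (h n)(k := h n k + 1)}" for k
    have Es: "E k \<in> sets M" for k
    proof -
      have "E k = B n \<inter> {\<omega>\<in>space M. X (Suc n) \<omega> = (h n)(k := h n k + 1)}" unfolding E_def B_def by auto
      then show ?thesis using Bs predX[OF Xm] by auto
    qed
    have disj: "disjoint_family E"
      unfolding disjoint_family_on_def E_def
    proof (intro ballI impI)
      fix k k' :: 'ag assume "k \<noteq> k'"
      then have "(h n)(k := h n k + 1) \<noteq> (h n)(k' := h n k' + 1)"
        by (metis fun_upd_apply n_not_Suc_n Suc_eq_plus1)
      then show "{\<omega> \<in> space M. (\<forall>m\<le>n. X m \<omega> = h m) \<and> X (Suc n) \<omega> = (h n)(k := h n k + 1)} \<inter>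
          {\<omega> \<in> space M. (\<forall>m\<le>n. X m \<omega> = h m) \<and> X (Suc n) \<omega> = (h n)(k' := h n k' + 1)} = {}" by auto
    qed
    have den: "(\<Sum>j\<in>UNIV. F j (h n j)) > 0"
      using Fpos hpos by (intro sum_pos) auto
    have "measure M (\<Union>k. E k) = (\<Sum>k\<in>UNIV. measure M (E k))"
      using Es disj by (intro finite_measure_finite_Union) auto
    also have "\<dots> = (\<Sum>k\<in>UNIV. measure M (B n) * (F k (h n k) / (\<Sum>j\<in>UNIV. F j (h n j))))"
      unfolding E_def B_def using tr by simp
    also have "\<dots> = measure M (B n) * ((\<Sum>k\<in>UNIV. F k (h n k)) / (\<Sum>j\<in>UNIV. F j (h n j)))"
      by (subst sum_distrib_left[symmetric], subst sum_divide_distrib[symmetric], rule refl)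
    also have "\<dots> = measure M (B n)" using den by simp
    finally have mU: "measure M (\<Union>k. E k) = measure M (B n)" .
    have EB: "(\<Union>k. E k) \<subseteq> B n" unfolding E_def B_def by auto
    have Us: "(\<Union>k. E k) \<in> sets M" using Es by auto
    have "measure M (B n - (\<Union>k. E k)) = 0"
      using finite_measure_Diff[OF Bs Us EB] mU by simp
    then have "B n - (\<Union>k. E k) \<in> null_sets M"
      using Bs Us by (simp add: emeasure_eq_measure null_sets_def)
    from AE_not_in[OF this]
    have "AE \<omega> in M. (\<omega> \<in> tM \<inter> B (Suc n)) = (\<omega> \<in> tM \<inter> B n)"
    proof eventually_elim
      case (elim \<omega>)
      show ?case
      proof
        assume "\<omega> \<in> tM \<inter> B (Suc n)" then show "\<omega> \<in> tM \<inter> B n" unfolding B_def by auto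
      next
        assume w: "\<omega> \<in> tM \<inter> B n"
        with elim obtain k where k: "\<omega> \<in> E k" by auto
        have "k = i"
        proof (rule ccontr)
          assume ki: "k \<noteq> i"
          from k have A: "X (Suc n) \<omega> k = h n k + 1" unfolding E_def by auto
          from w have B: "X (Suc n) \<omega> k = X 0 \<omega> k" unfolding tM_def tMon_def using ki by blast
          from w have C: "X 0 \<omega> k = h 0 k" unfolding B_def by auto
          from A B C have "h n k + 1 = h 0 k" by linarith
          then show False unfolding hn[OF ki] by simp
        qed
        with k w show "\<omega> \<in> tM \<inter> B (Suc n)" unfolding E_def B_def
          using hSuc[of n] by (auto simp: le_Suc_eq)
      qed
    qed
    then have "measure M (tM \<inter> B (Suc n)) = measure M (tM \<inter> B n)"
      using Bs tMs by (intro measure_eq_AE) auto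
    then show ?case using Suc by simp
  qed
  have upB: "measure M tM \<le> measure M (B n)" for n
    using key[of n] finite_measure_mono[of "tM \<inter> B n" "B n"] Bs by auto
  define P where "P n = (\<Sum>k<n. 1 / a k)" for n
  have PT: "P n \<le> T" for n unfolding P_def T_def
    using sumA apos by (intro sum_le_suminf) (auto intro: less_imp_le)
  have Plim: "P \<longlonglongrightarrow> T" unfolding P_def T_def using summable_LIMSEQ[OF sumA] by simp
  have lowp: "exp (- S * (1 / a k)) \<le> p k" for k
  proof -
    have "1 + S / a k \<le> exp (S / a k)" by (rule exp_ge_add_one_self)
    then have "1 / exp (S / a k) \<le> 1 / (1 + S / a k)"
      using apos[of k] S0 by (intro divide_left_mono) (auto intro!: mult_pos_pos add_pos_nonneg)
    also have "1 / (1 + S / a k) = p k" unfolding p_def using apos[of k] S0 by (simp add: field_simps)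
    finally show ?thesis by (simp add: exp_minus field_simps)
  qed
  have upp: "p k \<le> exp (- c * S * (1 / a k))" for k
  proof -
    have "p k = 1 - S / (a k + S)" unfolding p_def using apos[of k] S0 by (simp add: field_simps)
    also have "\<dots> \<le> exp (- (S / (a k + S)))" using exp_ge_add_one_self[of "- (S / (a k + S))"] by simp
    also have "\<dots> \<le> exp (- c * S * (1 / a k))"
    proof -
      have "c * S / a k \<le> p k * S / a k"
        using cle[of k] S0 apos[of k] by (intro divide_right_mono mult_right_mono) auto
      also have "p k * S / a k = S / (a k + S)"
      proof -
        have "a k + S \<noteq> 0" using apos[of k] S0 by linarith
        then show ?thesis unfolding p_def using apos[of k] by (simp add: divide_simps)
      qed
      finally show ?thesis by simp
    qed
    finally show ?thesis .
  qed
  have lowB: "exp (- S * T) \<le> measure M (B n)" for n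
  proof -
    have "exp (- S * T) \<le> exp (- S * P n)" using PT[of n] S0 by (simp add: mult_left_mono)
    also have "exp (- S * P n) = (\<Prod>k<n. exp (- S * (1 / a k)))"
      unfolding P_def by (simp add: exp_sum[symmetric] sum_distrib_left)
    also have "\<dots> \<le> (\<Prod>k<n. p k)" using lowp by (intro prod_mono) auto
    finally show ?thesis using PB by simp
  qed
  have upB2: "measure M tM \<le> exp (- c * S * P n)" for n
  proof -
    have "measure M tM \<le> (\<Prod>k<n. p k)" using upB PB by simp
    also have "\<dots> \<le> (\<Prod>k<n. exp (- c * S * (1 / a k)))" using upp ppos by (intro prod_mono) (auto intro: less_imp_le)
    also have "\<dots> = exp (- c * S * P n)"
      unfolding P_def by (simp add: exp_sum[symmetric] sum_distrib_left)
    finally show ?thesis .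
  qed
  have up: "measure M tM \<le> exp (- c * S * T)"
  proof (rule LIMSEQ_le_const)
    show "(\<lambda>n. exp (- c * S * P n)) \<longlonglongrightarrow> exp (- c * S * T)"
      by (intro tendsto_intros Plim)
    show "\<exists>N. \<forall>n\<ge>N. measure M tM \<le> exp (- c * S * P n)" using upB2 by auto
  qed
  have dec: "decseq B" unfolding B_def by (intro decseq_SucI) auto
  have lim: "(\<lambda>n. measure M (B n)) \<longlonglongrightarrow> measure M (\<Inter>n. B n)"
    using Bs dec by (intro finite_Lim_measure_decseq) auto
  have "exp (- S * T) \<le> measure M (\<Inter>n. B n)"
    using lim lowB by (intro LIMSEQ_le_const) auto
  also have "\<dots> \<le> measure M tM"
  proof (rule finite_measure_mono[OF _ tMs])
    show "(\<Inter>n. B n) \<subseteq> tM"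
    proof
      fix \<omega> assume w: "\<omega> \<in> (\<Inter>n. B n)"
      then have "X n \<omega> = h n" for n unfolding B_def by auto
      moreover have "\<omega> \<in> space M" using w unfolding B_def by auto
      ultimately show "\<omega> \<in> tM" unfolding tM_def tMon_def by (auto simp: hn)
    qed
  qed
  finally have low: "exp (- S * T) \<le> measure M tM" .
  have prod1: "(\<Prod>j\<in>UNIV - {i}. exp (- F j (x0 j) * T)) = exp (- S * T)"
    unfolding S_def by (simp add: exp_sum[symmetric] sum_distrib_right sum_negf)
  have prod2: "(\<Prod>j\<in>UNIV - {i}. exp (- c * F j (x0 j) * T)) = exp (- c * S * T)"
    unfolding S_def by (simp add: exp_sum[symmetric] sum_distrib_right sum_distrib_left sum_negf)
  have Teq: "(\<Sum>k. 1 / F i (x0 i + k)) = T" unfolding T_def a_def ..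
  have ceq: "(INF k. F i (x0 i + k) / (F i (x0 i + k) + (\<Sum>j\<in>UNIV - {i}. F j (x0 j)))) = c"
    unfolding c_def p_def a_def S_def ..
  show ?thesis unfolding Let_def Teq ceq prod1 prod2 tM_def[symmetric]
    using cpos low up by auto
qed

end
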